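(* For every positive integer $m$, $$\sum_{t=0}^{\lfloor m/6\rfloor}\binom{2m}{m+6t}=\frac12\left(\frac{2^{2m-1}+1}{3}+3^{m-1}+\binom{2m}{m}\right).$$ *)

theory Defs
  imports Complex_Main
begin

end

theory Submission imports Defs begin
definition w :: complex where "w = Complex (1/2) (sqrt 3 / 2)"
lemma w2: "w^2 = w - 1"
  by (simp add: w_def power2_eq_square Complex_eq complex_eq_iff)
lemma w3: "w^3 = -1"
proof -
  have "w^3 = w * w^2" by (simp add: power_numeral_reduce)
  also have "... = w*w - w" by (simp add: w2 algebra_simps)
  also have "... = -1" using w2 by (simp add: power2_eq_square)
  finally show ?thesis .
qed
lemma w6: "w^6 = 1"
proof -
  have "w^6 = (w^3)^2" by (simp flip: power_mult)
  thus ?thesis by (simp add: w3)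
qed
lemma wmod: "w^n = w^(n mod 6)"
proof -
  have "w^n = w^(6*(n div 6) + n mod 6)" by simp
  also have "... = (w^6)^(n div 6) * w^(n mod 6)" by (simp only: power_add power_mult)
  finally show ?thesis by (simp add: w6)
qed
lemma w4: "w^4 = -w" proof - have "w^4 = w*w^3" by (simp add: power_numeral_reduce) thus ?thesis by (simp add: w3) qed
lemma w5: "w^5 = 1 - w" proof - have "w^5 = w^2*w^3" by (simp flip: power_add) thus ?thesis by (simp add: w3 w2) qed
lemma base: "w^(5*j)*(1+w^j)^2 = w^(5*j) + 2 + w^(7*j)"
proof -
  have "w^(5*j)*(1+w^j)^2 = w^(5*j) + 2*w^(6*j) + w^(7*j)"
    by (simp add: power2_eq_square algebra_simps flip: power_add)
  also have "w^(6*j) = 1" by (simp add: power_mult w6)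
  finally show ?thesis by simp
qed
lemma vals: "w^5 * (1+w)^2 = 3" "w^10*(1+w^2)^2 = 1" "w^15*(1+w^3)^2 = 0"
   "w^20*(1+w^4)^2 = 1" "w^25*(1+w^5)^2 = 3"
  using base[of 1] base[of 2] base[of 3] base[of 4] base[of 5]
  by (simp_all add: wmod[of 10] wmod[of 15] wmod[of 20] wmod[of 25] wmod[of 7] wmod[of 14] wmod[of 21] wmod[of 28] wmod[of 35] w2 w3 w4 w5)

lemma w_ne: "w \<noteq> 1" "w - 1 \<noteq> 1" "(-1::complex) \<noteq> 1" "-w \<noteq> 1" "1 - w \<noteq> 1"
  by (simp_all add: w_def complex_eq_iff)

lemma root_sum: "(\<Sum>j<6. w^(j*d)) = (if d mod 6 = 0 then 6 else 0)"
proof -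
  define x where "x = w^(d mod 6)"
  have eq: "w^(j*d) = x^j" for j
    by (simp add: x_def flip: power_mult) (metis wmod mult.commute mod_mult_right_eq)
  have x6: "x^6 = 1" unfolding x_def by (simp add: w6 flip: power_mult) (metis power_mult w6 power_one mult.commute)
  show ?thesis
  proof (cases "d mod 6 = 0")
    case True
    then have "x = 1" by (simp add: x_def)
    then show ?thesis using True by (simp add: eq)
  next
    case False
    have "d mod 6 < 6" by simp
    then have "d mod 6 = 1 \<or> d mod 6 = 2 \<or> d mod 6 = 3 \<or> d mod 6 = 4 \<or> d mod 6 = 5" using False by linarith
    then have "x \<noteq> 1" unfolding x_def using w_ne w2 w3 w4 w5 by auto
    then show ?thesis using False x6 by (simp add: eq sum_gp_strict)
  qed
qed

lemma modlem: "(k+5*m) mod 6 = 0 \<longleftrightarrow> k mod 6 = m mod 6" for k m :: nat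
proof -
  have "(k+5*m) mod 6 = 0 \<longleftrightarrow> int 6 dvd int (k+5*m)" by (simp only: int_dvd_int_iff) (simp add: dvd_eq_mod_eq_0)
  also have "... \<longleftrightarrow> (6::int) dvd (int k - int m) + 6 * int m" by (simp add: algebra_simps)
  also have "... \<longleftrightarrow> (6::int) dvd (int k - int m)" by (rule dvd_add_left_iff) (rule dvd_triv_left)
  also have "... \<longleftrightarrow> int k mod 6 = int m mod 6" by (simp add: mod_eq_dvd_iff)
  also have "... \<longleftrightarrow> k mod 6 = m mod 6" by (metis of_nat_eq_iff of_nat_numeral zmod_int)
  finally show ?thesis .
qed

lemma filterA:
  assumes "m \<ge> 1"
  shows "6 * (\<Sum>k\<le>2*m. if k mod 6 = m mod 6 then of_nat ((2*m) choose k) else (0::complex))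
         = 4^m + 2*3^m + 2"
proof -
  have "(\<Sum>j<6. (w^(5*j)*(1+w^j)^2)^m) = 4^m + 2*3^m + 2"
    proof -
    have e: "(\<Sum>j<6. g j) = g 0 + g 1 + g 2 + g 3 + g 4 + g 5" for g :: "nat \<Rightarrow> complex"
      by (simp add: eval_nat_numeral)
    show ?thesis using vals assms by (simp add: e)
  qed
  moreover have "(\<Sum>j<6. (w^(5*j)*(1+w^j)^2)^m) =
      (\<Sum>j<6. w^(5*j*m) * (\<Sum>k\<le>2*m. of_nat ((2*m) choose k) * w^(j*k)))"
  proof (rule sum.cong[OF refl])
    fix j
    have "(w^(5*j)*(1+w^j)^2)^m = w^(5*j*m) * (w^j+1)^(2*m)"
      by (simp add: power_mult_distrib add.commute flip: power_mult)
    also have "(w^j+1)^(2*m) = (\<Sum>k\<le>2*m. of_nat ((2*m) choose k) * w^(j*k))"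
      using binomial_ring[of "w^j" 1 "2*m"] by (simp add: mult.commute flip: power_mult)
    finally show "(w^(5*j)*(1+w^j)^2)^m = w^(5*j*m) * (\<Sum>k\<le>2*m. of_nat ((2*m) choose k) * w^(j*k))" .
  qed
  moreover have "... = (\<Sum>k\<le>2*m. of_nat ((2*m) choose k) * (\<Sum>j<6. w^(j*(k+5*m))))"
    
  proof -
    have "(\<Sum>j<6. w^(5*j*m) * (\<Sum>k\<le>2*m. of_nat ((2*m) choose k) * w^(j*k)))
        = (\<Sum>j<6. \<Sum>k\<le>2*m. of_nat ((2*m) choose k) * w^(j*(k+5*m)))"
    proof (rule sum.cong[OF refl])
      fix j
      have "w^(5*j*m) * (of_nat ((2*m) choose k) * w^(j*k)) = of_nat ((2*m) choose k) * w^(j*(k+5*m))" for k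
      proof -
        have "j*(k+5*m) = j*k + 5*j*m" by (simp add: algebra_simps)
        then show ?thesis by (simp only: power_add mult_ac)
      qed
      then show "w^(5*j*m) * (\<Sum>k\<le>2*m. of_nat ((2*m) choose k) * w^(j*k)) = (\<Sum>k\<le>2*m. of_nat ((2*m) choose k) * w^(j*(k+5*m)))"
        by (simp only: sum_distrib_left)
    qed
    also have "... = (\<Sum>k\<le>2*m. \<Sum>j<6. of_nat ((2*m) choose k) * w^(j*(k+5*m)))"
      by (rule sum.swap)
    also have "... = (\<Sum>k\<le>2*m. of_nat ((2*m) choose k) * (\<Sum>j<6. w^(j*(k+5*m))))"
      by (simp only: sum_distrib_left)
    finally show ?thesis .
  qed
  moreover have "... = 6 * (\<Sum>k\<le>2*m. if k mod 6 = m mod 6 then of_nat ((2*m) choose k) else (0::complex))"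
  proof -
    have "(k+5*m) mod 6 = 0 \<longleftrightarrow> k mod 6 = m mod 6" for k :: nat by (rule modlem)
    then show ?thesis by (simp add: root_sum sum_distrib_left) (rule sum.cong; simp)
  qed
  ultimately show ?thesis by simp
qed
lemma filterB:
  fixes m :: nat
  shows "(\<Sum>k\<le>2*m. if k mod 6 = m mod 6 then real ((2*m) choose k) else 0)
     = 2 * (\<Sum>t=0..m div 6. real ((2*m) choose (m + 6*t))) - real ((2*m) choose m)"
proof -
  define c where "c k = real ((2*m) choose k)" for k
  define A where "A = {k\<in>{..2*m}. k mod 6 = m mod 6}"
  define B1 where "B1 = (\<lambda>t. m+6*t) ` {0..m div 6}"
  define B2 where "B2 = (\<lambda>t. m-6*t) ` {1..m div 6}"
  have AB: "A = B1 \<union> B2"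
  proof
    show "A \<subseteq> B1 \<union> B2"
    proof
      fix k assume "k \<in> A"
      then have k: "k \<le> 2*m" "k mod 6 = m mod 6" by (auto simp: A_def)
      show "k \<in> B1 \<union> B2"
      proof (cases "m \<le> k")
        case True
        then obtain t where "k = m + 6*t" using k(2)
          by (metis le_add_diff_inverse mod_eq_dvd_iff_nat dvd_def)
        moreover have "t \<le> m div 6" using k(1) \<open>k = m + 6*t\<close> by linarith
        ultimately show ?thesis by (auto simp: B1_def)
      next
        case False
        then obtain t where t: "m = k + 6*t" using k(2)
          by (metis le_add_diff_inverse less_or_eq_imp_le nat_le_linear mod_eq_dvd_iff_nat dvd_def)
        then have "t \<ge> 1" "t \<le> m div 6" "k = m - 6*t" using False by linarith+
        then show ?thesis by (auto simp: B2_def)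
      qed
    qed
  next
    show "B1 \<union> B2 \<subseteq> A"
    proof
      fix k assume "k \<in> B1 \<union> B2"
      then show "k \<in> A"
      proof
        assume "k \<in> B1"
        then obtain t where t: "t \<le> m div 6" "k = m + 6*t" by (auto simp: B1_def)
        have "6*t \<le> m" using t(1) by linarith
        then show ?thesis using t by (simp add: A_def)
      next
        assume "k \<in> B2"
        then obtain t where t: "t \<le> m div 6" "k = m - 6*t" by (auto simp: B2_def)
        have "6*t \<le> m" using t(1) by linarith
        then have "m = k + 6*t" using t by simp
        then have "m mod 6 = k mod 6" by simp
        then show ?thesis using t by (simp add: A_def)
      qed
    qed
  qed
  have disj: "B1 \<inter> B2 = {}" by (auto simp: B1_def B2_def)
  have "(\<Sum>k\<le>2*m. if k mod 6 = m mod 6 then c k else 0) = sum c A"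
    unfolding A_def by (rule sum.inter_filter[symmetric]) simp
  also have "... = sum c B1 + sum c B2" using AB disj by (simp add: sum.union_disjoint B1_def B2_def)
  also have "sum c B1 = (\<Sum>t=0..m div 6. c (m+6*t))"
    unfolding B1_def by (subst sum.reindex) (auto simp: inj_on_def)
  also have "sum c B2 = (\<Sum>t=1..m div 6. c (m-6*t))"
    unfolding B2_def by (subst sum.reindex) (auto simp: inj_on_def)
  also have "... = (\<Sum>t=1..m div 6. c (m+6*t))"
  proof (rule sum.cong[OF refl])
    fix t assume "t \<in> {1..m div 6}"
    then have "6*t \<le> m" by auto
    then show "c (m-6*t) = c (m+6*t)" unfolding c_def
      using binomial_symmetric[of "m-6*t" "2*m"] by (simp add: algebra_simps)
  qed
  finally have F: "(\<Sum>k\<le>2*m. if k mod 6 = m mod 6 then c k else 0) = (\<Sum>t=0..m div 6. c (m+6*t)) + (\<Sum>t=1..m div 6. c (m+6*t))" .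
  have H: "(\<Sum>t=0..m div 6. c (m+6*t)) = c m + (\<Sum>t=1..m div 6. c (m+6*t))"
    by (simp add: sum.atLeast_Suc_atMost)
  show ?thesis using F H unfolding c_def by linarith
qed

theorem lemma4:
  fixes m :: nat
  assumes "m \<ge> 1"
  shows "(\<Sum>t=0..m div 6. real ((2*m) choose (m + 6*t))) =
         (1/2) * ((2 ^ (2*m - 1) + 1) / 3 + 3 ^ (m - 1) + real ((2*m) choose m))"
proof -
  define S where "S = (\<Sum>k\<le>2*m. if k mod 6 = m mod 6 then real ((2*m) choose k) else 0)"
  have "complex_of_real (6*S) = complex_of_real (4^m + 2*3^m + 2)"
    using filterA[OF assms] by (simp add: S_def of_real_sum if_distrib cong: if_cong)
  then have S6: "6*S = 4^m + 2*3^m + 2" using of_real_eq_iff by blast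
  have SB: "S = 2 * (\<Sum>t=0..m div 6. real ((2*m) choose (m + 6*t))) - real ((2*m) choose m)"
    using filterB S_def by simp
  have p1: "(2::real)^(2*m-1) = 4^m/2"
  proof -
    have "(2::real)^(2*m) = 2 * 2^(2*m-1)" using assms
      by (metis Suc_diff_1 mult_pos_pos pos2 less_le_trans zero_less_one power_Suc)
    thus ?thesis by (simp add: power_mult)
  qed
  have p2: "(3::real)^(m-1) = 3^m/3"
  proof -
    have "(3::real)^m = 3 * 3^(m-1)" using assms
      by (metis Suc_diff_1 less_le_trans zero_less_one power_Suc)
    thus ?thesis by simp
  qed
  show ?thesis using S6 SB p1 p2 by (simp add: field_simps)
qed
end
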